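(* Let $T\in\mathbb{N}_+$, $R\ge1$ and $N>0$ with $(N/R)^{1/T}>4$. Let $\mathcal{Q}$ be the set of sequences $Q=(Q^{(1)},\dots,Q^{(T)})\in\mathbb{R}_+^T$ with $Q^{(1)}\le Q^{(2)}\le\dots\le Q^{(T)}$, $Q^{(1)}\ge R$, and $\sum_{s=1}^TQ^{(s)}\ge N$. For $Q\in\mathcal{Q}$ and $S\subseteq[T]$ define $\phi_Q(\emptyset)=R$ and $\phi_Q(S)=\sum_{s\in S}Q^{(s)}$ for $S\ne\emptyset$. Then $$\inf_{Q\in\mathcal{Q}}\ \sup_{x\in[R,N]}\ \min_{S\subseteq[T]:\ \phi_Q(S)>x}\frac{\phi_Q(S)}{x}\ \ge\ \frac18\Big(\frac{N}{R}\Big)^{1/T},$$ with the convention that a minimum over an empty set is $+\infty$. *)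

theory Defs
  imports Complex_Main "HOL-Library.Extended_Real"
begin

definition phiQ :: "real \<Rightarrow> (nat \<Rightarrow> real) \<Rightarrow> nat set \<Rightarrow> real" where
  "phiQ R Q S = (if S = {} then R else (\<Sum>s\<in>S. Q s))"

text \<open>The admissible sequences Q = (Q 1, ..., Q T) (only values on {1..T} matter).\<close>
definition admissibleQ :: "nat \<Rightarrow> real \<Rightarrow> real \<Rightarrow> (nat \<Rightarrow> real) set" where
  "admissibleQ T R N = {Q. (\<forall>s\<in>{1..T}. Q s > 0)
      \<and> (\<forall>s. 1 \<le> s \<and> s < T \<longrightarrow> Q s \<le> Q (s + 1))
      \<and> Q 1 \<ge> R \<and> (\<Sum>s=1..T. Q s) \<ge> N}"

text \<open>min over S \<subseteq> [T] with phi_Q(S) > x of phi_Q(S)/x; empty minimum is +\<infinity>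
  (the Inf of the empty set in ereal is \<top> = \<infinity>).\<close>
definition minRatio :: "nat \<Rightarrow> real \<Rightarrow> (nat \<Rightarrow> real) \<Rightarrow> real \<Rightarrow> ereal" where
  "minRatio T R Q x = (INF S \<in> {S. S \<subseteq> {1..T} \<and> phiQ R Q S > x}. ereal (phiQ R Q S / x))"

end

theory Submission
  imports Defs
begin

lemma mono_range:
  fixes Q :: "nat \<Rightarrow> real" and T i d :: nat
  assumes "\<forall>s. 1 \<le> s \<and> s < T \<longrightarrow> Q s \<le> Q (s + 1)" "1 \<le> i" "i + d \<le> T"
  shows "Q i \<le> Q (i + d)"
  using assms(3)
proof (induction d)
  case 0 then show ?case by simp
next
  case (Suc d)
  then have "Q i \<le> Q (i + d)" by simp
  also have "\<dots> \<le> Q (i + d + 1)" using assms(1,2) Suc.prems by auto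
  finally show ?case by simp
qed

lemma pow_bound:
  fixes Q :: "nat \<Rightarrow> real" and c R :: real
  assumes "c \<ge> 0" "R \<ge> 0" "\<And>j. j < k \<Longrightarrow> Q (j+1) \<le> c * (if j = 0 then R else (\<Sum>s=1..j. Q s))"
    and pos: "\<And>s. 1 \<le> s \<Longrightarrow> s \<le> k \<Longrightarrow> Q s > 0"
  shows "(\<Sum>s=1..k. Q s) \<le> (1+c)^k * R"
  using assms(3) pos
proof (induction k)
  case 0 then show ?case using assms by simp
next
  case (Suc k)
  have IH: "(\<Sum>s=1..k. Q s) \<le> (1+c)^k * R" using Suc by auto
  have R1: "R \<le> (1+c)^k * R" using assms by (simp add: mult_le_cancel_right1 one_le_power)
  have nn: "0 \<le> (\<Sum>s=1..k. Q s)" using Suc.prems(2) by (intro sum_nonneg) (auto intro: less_imp_le)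
  have "Q (k+1) \<le> c * (if k = 0 then R else (\<Sum>s=1..k. Q s))" using Suc.prems by auto
  also have "\<dots> \<le> c * ((1+c)^k * R)" using IH R1 assms(1) by (auto intro: mult_left_mono)
  finally have "Q (k+1) \<le> c * ((1+c)^k * R)" .
  then have "(\<Sum>s=1..Suc k. Q s) \<le> (1+c)^k * R + c * ((1+c)^k * R)" using IH by simp
  also have "\<dots> = (1+c)^(Suc k) * R" by (simp add: algebra_simps)
  finally show ?case .
qed

theorem mainTheorem13:
  fixes T :: nat and R N :: real
  assumes "T \<ge> 1" and "R \<ge> 1" and "N > 0" and "(N / R) powr (1 / real T) > 4"
  shows "(INF Q \<in> admissibleQ T R N. SUP x \<in> {R..N}. minRatio T R Q x)
           \<ge> ereal ((1/8) * (N / R) powr (1 / real T))"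
proof (rule INF_greatest)
  fix Q assume "Q \<in> admissibleQ T R N"
  then have pos: "\<forall>s\<in>{1..T}. Q s > 0" and mon: "\<forall>s. 1 \<le> s \<and> s < T \<longrightarrow> Q s \<le> Q (s + 1)"
    and q1: "Q 1 \<ge> R" and tot: "(\<Sum>s=1..T. Q s) \<ge> N"
    unfolding admissibleQ_def by auto
  define a where "a = (N / R) powr (1 / real T)"
  define c where "c = a / 8"
  define x where "x = (\<lambda>k::nat. if k = 0 then R else (\<Sum>s=1..k. Q s))"
  have a4: "a > 4" using assms a_def by simp
  have c0: "c \<ge> 0" using a4 c_def by simp
  have aT: "a ^ T = N / R" unfolding a_def using assms
    by (simp add: powr_realpow[symmetric] powr_powr)
  have ac: "1 + c < a" using a4 c_def by simp
  have powlt: "(1+c)^k * R < N" if "k \<le> T" for k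
  proof -
    have "(1+c)^k \<le> (1+c)^T" using c0 that by (simp add: power_increasing)
    also have "\<dots> < a ^ T" using ac c0 assms(1) by (intro power_strict_mono) auto
    finally have "(1+c)^k < N / R" using aT by simp
    then show ?thesis using assms by (simp add: pos_less_divide_eq)
  qed
  have "\<exists>k. k < T \<and> Q (k+1) > c * x k"
  proof (rule ccontr)
    assume "\<not> ?thesis"
    then have h: "\<And>j. j < T \<Longrightarrow> Q (j+1) \<le> c * x j" by (meson not_less)
    have "(\<Sum>s=1..T. Q s) \<le> (1+c)^T * R"
      using pow_bound[of c R T Q] c0 assms(2) h pos unfolding x_def by auto
    with powlt[of T] tot show False by simp
  qed
  then obtain k where k: "k < T" "Q (k+1) > c * x k" "\<And>j. j < k \<Longrightarrow> \<not> (Q (j+1) > c * x j)"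
    using exists_least_iff[of "\<lambda>k. k < T \<and> Q (k+1) > c * x k"] by (metis less_trans)
  have xk_le: "x k \<le> (1+c)^k * R"
  proof (cases "k = 0")
    case True then show ?thesis by (simp add: x_def)
  next
    case False
    have "(\<Sum>s=1..k. Q s) \<le> (1+c)^k * R"
      using pow_bound[of c R k Q] c0 assms(2) k(3) pos k(1) unfolding x_def by (auto simp: not_less)
    then show ?thesis using False by (simp add: x_def)
  qed
  have xkR: "x k \<ge> R"
  proof (cases "k = 0")
    case True then show ?thesis by (simp add: x_def)
  next
    case False
    have "Q 1 \<le> (\<Sum>s=1..k. Q s)"
      using False k(1) pos by (intro member_le_sum) (auto intro: less_imp_le)
    then show ?thesis using False q1 by (simp add: x_def)
  qed
  have xkN: "x k \<le> N" using xk_le powlt[of k] k(1) by simp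
  have "ereal c \<le> minRatio T R Q (x k)"
    unfolding minRatio_def
  proof (rule INF_greatest)
    fix S assume S: "S \<in> {S. S \<subseteq> {1..T} \<and> x k < phiQ R Q S}"
    have ne: "S \<noteq> {}" using S xkR by (auto simp: phiQ_def)
    have "\<not> S \<subseteq> {1..k}"
    proof
      assume sub: "S \<subseteq> {1..k}"
      have "(\<Sum>s\<in>S. Q s) \<le> (\<Sum>s=1..k. Q s)"
        using sub pos k(1) by (intro sum_mono2) (auto intro: less_imp_le)
      moreover have "k \<noteq> 0" using sub ne by auto
      ultimately show False using S ne by (simp add: phiQ_def x_def)
    qed
    then obtain j where j: "j \<in> S" "j > k" "j \<le> T" using S by fastforce
    have "Q (k+1) \<le> Q j" using mono_range[OF mon, of "k+1" "j - (k+1)"] j by simp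
    also have "Q j \<le> (\<Sum>s\<in>S. Q s)"
      using j S pos by (intro member_le_sum) (auto intro: less_imp_le finite_subset)
    finally have "c * x k < phiQ R Q S" using k(2) ne by (simp add: phiQ_def)
    then have "c \<le> phiQ R Q S / x k" using xkR assms(2) by (simp add: pos_le_divide_eq)
    then show "ereal c \<le> ereal (phiQ R Q S / x k)" by simp
  qed
  also have "\<dots> \<le> (SUP x\<in>{R..N}. minRatio T R Q x)"
    using xkR xkN by (intro SUP_upper) auto
  finally show "ereal (1 / 8 * (N / R) powr (1 / real T)) \<le> (SUP x\<in>{R..N}. minRatio T R Q x)"
    by (simp add: c_def a_def)
qed

end
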